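(* Let $q=p^n$ be odd, let $k\neq 0$ be a positive integer, and let $f(x)=ax^{p^k+1}+dx^{p^k}+bx+c\in\mathbb{F}_q[x]$. If $f(x)=g(x)^2$ for some polynomial $g$, then either $d^{p^k}a=ba^{p^k}$ and $d^{p^k+1}a=ca^{p^k+1}$, or $a=b=d=0$. *)

theory Defs
  imports "HOL-Computational_Algebra.Polynomial"
begin

end

theory Submission
  imports Defs
begin

lemma card_zero: "of_nat (card (UNIV::'a::{finite,ring_1} set)) = (0::'a)"
proof -
  have "(\<Sum>x\<in>UNIV. x + 1) = (\<Sum>x\<in>UNIV. (x::'a))"
    by (rule sum.reindex_bij_witness[of _ "\<lambda>x. x - 1" "\<lambda>x. x + 1"]) auto
  moreover have "(\<Sum>x\<in>UNIV. x + 1) = (\<Sum>x\<in>UNIV. (x::'a)) + of_nat (card (UNIV::'a set))"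
    by (simp add: sum.distrib)
  ultimately show ?thesis by simp
qed

theorem lemma1:
  fixes a b c d :: "'a :: {finite, field}" and p n k :: nat and g :: "'a poly"
  assumes "prime p" and "card (UNIV :: 'a set) = p ^ n" and "odd (card (UNIV :: 'a set))" and "k > 0"
    and "monom a (p ^ k + 1) + monom d (p ^ k) + monom b 1 + [:c:] = g ^ 2"
  shows "(d ^ (p ^ k) * a = b * a ^ (p ^ k) \<and> d ^ (p ^ k + 1) * a = c * a ^ (p ^ k + 1))
         \<or> (a = 0 \<and> b = 0 \<and> d = 0)"
proof (cases "a = 0")
  case True
  then show ?thesis using prime_gt_0_nat[OF assms(1)] by simp
next
  case a0: False
  define q where "q = p ^ k"
  define f where "f = monom a (q + 1) + monom d q + monom b 1 + [:c:]"
  have fg: "f = g ^ 2" using assms(5) unfolding f_def q_def .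
  have "(of_nat p :: 'a) ^ n = 0" using card_zero[where 'a='a] assms(2) by (simp add: of_nat_power)
  hence p0: "(of_nat p :: 'a) = 0" by simp
  have q0: "(of_nat q :: 'a) = 0" using p0 assms(4) unfolding q_def by (simp add: of_nat_power)
  have "card {0, 1::'a} \<le> card (UNIV::'a set)" by (rule card_mono) auto
  hence "card (UNIV::'a set) \<ge> 2" by simp
  hence "n > 0" using assms(2) by (cases n) auto
  hence "odd p" using assms(2) assms(3) by simp
  hence qodd: "odd q" unfolding q_def by simp
  have q1: "q \<ge> 1" using qodd by (cases q) auto
  have fd: "pderiv f = monom a q + [:b:]"
    unfolding f_def using q0 q1
    by (simp add: pderiv_add pderiv_monom pderiv_pCons algebra_simps monom_0)
  have fd2: "pderiv f = g * (pderiv g + pderiv g)"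
    unfolding fg by (simp add: power2_eq_square pderiv_mult algebra_simps)
  have gf': "g dvd pderiv f" using fd2 by simp
  have gf: "g dvd f" using fg by (simp add: power2_eq_square)
  have h: "f - [:0,1:] * pderiv f = monom d q + [:c:]"
  proof -
    have x1: "[:0,1:] * monom a q = monom a (q+1)" by (simp add: monom_Suc)
    have x2: "[:0,1:] * [:b:] = monom b 1" by (simp add: monom_Suc monom_0)
    have "[:0,1:] * pderiv f = monom a (q+1) + monom b 1" unfolding fd
      by (simp only: distrib_left x1 x2)
    thus ?thesis unfolding f_def by simp
  qed
  have "smult a (f - [:0,1:] * pderiv f) - smult d (pderiv f) =
     smult a (monom d q + [:c:]) - smult d (monom a q + [:b:])" unfolding h by (simp only: fd)
  also have "\<dots> = [:a*c - d*b:]" by (simp add: smult_monom mult.commute smult_add_right)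
  finally have "smult a (f - [:0,1:] * pderiv f) - smult d (pderiv f) = [:a*c - d*b:]" .
  moreover have "g dvd smult a (f - [:0,1:] * pderiv f) - smult d (pderiv f)"
    using gf gf' by (intro dvd_diff dvd_smult dvd_mult) auto
  ultimately have gc: "g dvd [:a*c - d*b:]" by simp
  have acdb: "a * c = d * b"
  proof (rule ccontr)
    assume "a * c \<noteq> d * b"
    hence "is_unit [:a*c - d*b:]" by (intro is_unit_triv) simp
    hence "is_unit g" using gc by (rule dvd_unit_imp_unit[rotated])
    hence "degree g = 0" by (metis is_unit_iff_degree not_is_unit_0)
    hence "degree f = 0" using fg degree_mult_le[of g g] by (simp add: power2_eq_square)
    moreover have "coeff f (q+1) = a" unfolding f_def using q1 by (simp add: coeff_monom)
    ultimately show False using a0 le_degree[of f "q+1"] by simp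
  qed
  define \<beta> where "\<beta> = d / a"
  have "poly f (-\<beta>) = 0"
    unfolding f_def \<beta>_def using a0 acdb qodd
    by (simp add: poly_monom field_simps power_minus_odd)
  hence "poly g (-\<beta>) = 0" using fg by simp
  hence "poly (pderiv f) (-\<beta>) = 0" using fd2 by simp
  hence "b = a * \<beta> ^ q" unfolding fd using qodd by (simp add: poly_monom power_minus_odd)
  hence e1: "d ^ q * a = b * a ^ q" unfolding \<beta>_def using a0 by (simp add: field_simps power_divide)
  have "d ^ (q+1) * a = c * a ^ (q+1)"
  proof -
    have "d ^ (q+1) * a = d * (d ^ q * a)" by simp
    also have "\<dots> = (d * b) * a ^ q" using e1 by simp
    also have "\<dots> = c * a ^ (q+1)" using acdb by (simp add: algebra_simps)
    finally show ?thesis .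
  qed
  with e1 show ?thesis unfolding q_def by simp
qed

end
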